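(* Let $p,q$ be integers with $2\le q<p$ and $q\mid p$, and let $s=\frac{\log q}{\log p}$. There exist uncountably many regular mappings $\tau$ with $\max_{n\ge1}\ell_n<\infty$, giving pairwise distinct sets $\Lambda(\tau)$ (regular spectra of $\mu_{p,q}$), such that $D_s^+(\Lambda(\tau))>0$.
   Context: $\mu_{p,q}$ denotes the self-similar probability measure on $\mathbb R$ satisfying $\mu=\frac1q\sum_{d\in\mathcal D}\mu\circ f_d^{-1}$ with $f_d(x)=p^{-1}(x+d)$ and $\mathcal D=\frac pq\{0,1,\ldots,q-1\}$. Upper $r$-Beurling density: for a countable $\Lambda\subseteq\mathbb R$ and $r>0$, $D_r^+(\Lambda)=\limsup_{h\to\infty}\sup_{x\in\mathbb R}\frac{\#(\Lambda\cap B(x,h))}{h^r}$, where $B(x,h)=(x-h,x+h)$. Let $\Sigma_q=\{0,1,\ldots,q-1\}$, $\Sigma_q^n$ the words of length $n$, and $\Sigma_q^\ast=\bigcup_{n\ge1}\Sigma_q^n$. A map $\tau:\Sigma_q^\ast\to\{-1,0,\ldots,p-2\}$ is a regular mapping if (i) $\tau(0^n)=0$ for all $n\ge1$; (ii) $\tau(i_1\cdots i_n)\in i_n+q\mathbb Z$ for every word $i_1\cdots i_n$; (iii) for every $I\in\Sigma_q^\ast$, $\tau(I0^l)=0$ for all sufficiently large $l$. For each $n\ge1$ write $n=i_1+i_2q+\cdots+i_Nq^{N-1}$ with $i_N\ne0$ and $I=i_1\cdots i_N$. Set $\lambda_0=0$ and $\lambda_n=\tau(I|_1)+\tau(I|_2)p+\cdots+\tau(I|_N)p^{N-1}+\sum_{k=N}^\infty\tau(I0^{k-N+1})p^k$,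 where $I|_j=i_1\cdots i_j$; let $\Lambda(\tau)=\{\lambda_n\}_{n\ge0}$ and $\ell_n=\#\{k\ge1:\tau(I0^k)\ne0\}$. A regular spectrum is a set $\Lambda(\tau)$ with $\tau$ regular and $\max_{n\ge1}\ell_n<\infty$; by a known result (Dai–He–Lai) such sets are spectra of $\mu_{p,q}$, i.e. $\{e^{2\pi i\lambda x}\}_{\lambda\in\Lambda(\tau)}$ is an orthonormal basis of $L^2(\mu_{p,q})$. *)

theory Defs
  imports "HOL-Analysis.Analysis"
begin

text \<open>Base-q digits of n, least significant first: n = i_1 + i_2 q + ... + i_N q^(N-1),
  with i_N \<noteq> 0 when n > 0.  Words i_1 ... i_n are lists [i_1, ..., i_n].\<close>
fun digits :: "nat \<Rightarrow> nat \<Rightarrow> nat list" where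
  "digits q n = (if n = 0 \<or> q < 2 then [] else n mod q # digits q (n div q))"

definition words :: "nat \<Rightarrow> nat list set" where
  "words q = {I. I \<noteq> [] \<and> (\<forall>i\<in>set I. i < q)}"

definition regular_mapping :: "nat \<Rightarrow> nat \<Rightarrow> (nat list \<Rightarrow> int) \<Rightarrow> bool" where
  "regular_mapping p q \<tau> \<longleftrightarrow>
     (\<forall>I\<in>words q. \<tau> I \<in> {-1 .. int p - 2}) \<and>
     (\<forall>n\<ge>1. \<tau> (replicate n 0) = 0) \<and>
     (\<forall>I\<in>words q. \<tau> I mod int q = int (last I) mod int q) \<and>
     (\<forall>I\<in>words q. \<exists>L. \<forall>l\<ge>L. \<tau> (I @ replicate l 0) = 0)"

text \<open>\<lambda>_n; the infinite series is eventually zero for a regular mapping.\<close>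
definition lam :: "nat \<Rightarrow> nat \<Rightarrow> (nat list \<Rightarrow> int) \<Rightarrow> nat \<Rightarrow> real" where
  "lam p q \<tau> n =
     (if n = 0 then 0 else
      (let I = digits q n; N = length I in
        (\<Sum>j<N. real_of_int (\<tau> (take (Suc j) I)) * real p ^ j)
        + (\<Sum>k. real_of_int (\<tau> (I @ replicate (Suc k) 0)) * real p ^ (N + k))))"

definition Lambda :: "nat \<Rightarrow> nat \<Rightarrow> (nat list \<Rightarrow> int) \<Rightarrow> real set" where
  "Lambda p q \<tau> = range (lam p q \<tau>)"

definition ell :: "nat \<Rightarrow> (nat list \<Rightarrow> int) \<Rightarrow> nat \<Rightarrow> nat" where
  "ell q \<tau> n = card {k::nat. k \<ge> 1 \<and> \<tau> (digits q n @ replicate k 0) \<noteq> 0}"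

definition regular_spectrum_map :: "nat \<Rightarrow> nat \<Rightarrow> (nat list \<Rightarrow> int) \<Rightarrow> bool" where
  "regular_spectrum_map p q \<tau> \<longleftrightarrow> regular_mapping p q \<tau> \<and> (\<exists>B. \<forall>n\<ge>1. ell q \<tau> n \<le> B)"

definition upper_beurling_density :: "real \<Rightarrow> real set \<Rightarrow> ereal" where
  "upper_beurling_density r \<Lambda> =
     Limsup at_top (\<lambda>h::real. SUP x::real. ereal (real (card (\<Lambda> \<inter> ball x h)) / h powr r))"

end

theory Submission
  imports Defs
begin

declare digits.simps[simp del]

lemma digits_0[simp]: "digits q 0 = []"
  by (subst digits.simps) simp

lemma digits_pos: "2 \<le> q \<Longrightarrow> 0 < n \<Longrightarrow> digits q n = n mod q # digits q (n div q)"
  by (subst digits.simps) simp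

lemma digits_lt: "2 \<le> q \<Longrightarrow> d \<in> set (digits q n) \<Longrightarrow> d < q"
proof (induction n rule: less_induct)
  case (less n)
  show ?case
  proof (cases "n = 0")
    case True then show ?thesis using less by simp
  next
    case False
    then have "n div q < n" using less.prems by simp
    then show ?thesis using less.IH[of "n div q"] less.prems False digits_pos[of q n] by auto
  qed
qed

lemma digits_last: "2 \<le> q \<Longrightarrow> digits q n \<noteq> [] \<Longrightarrow> last (digits q n) \<noteq> 0"
proof (induction n rule: less_induct)
  case (less n)
  have n0: "n \<noteq> 0"
  proof
    assume "n = 0" then show False using less.prems by simp
  qed
  then have lt: "n div q < n" using less.prems by simp
  show ?case
  proof (cases "n div q = 0")
    case True
    then have "n < q" using less.prems by (simp add: div_eq_0_iff)
    then show ?thesis using digits_pos[of q n] n0 True less.prems by simp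
  next
    case False
    then have "digits q (n div q) \<noteq> []" using digits_pos[of q "n div q"] less.prems by simp
    then show ?thesis using less.IH[OF lt] less.prems digits_pos[of q n] n0 by simp
  qed
qed

lemma digits_nil_iff: "2 \<le> q \<Longrightarrow> digits q n = [] \<longleftrightarrow> n = 0"
  using digits_pos[of q n] by (cases "n = 0") auto

lemma digits_inj: "2 \<le> q \<Longrightarrow> digits q n = digits q m \<Longrightarrow> n = m"
proof (induction n arbitrary: m rule: less_induct)
  case (less n)
  show ?case
  proof (cases "n = 0")
    case True then show ?thesis using less.prems digits_nil_iff[of q m] by simp
  next
    case False
    then have m0: "m \<noteq> 0" using less.prems digits_nil_iff[of q m] digits_nil_iff[of q n] by auto
    have "n mod q = m mod q" "digits q (n div q) = digits q (m div q)"
      using less.prems digits_pos[of q n] digits_pos[of q m] False m0 by auto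
    moreover have "n div q < n" using False less.prems by simp
    ultimately have "n div q = m div q" "n mod q = m mod q" using less.IH less.prems by auto
    then show ?thesis by (metis div_mult_mod_eq)
  qed
qed

lemma digits_len: "2 \<le> q \<Longrightarrow> n < q ^ N \<Longrightarrow> length (digits q n) \<le> N"
proof (induction N arbitrary: n)
  case 0 then show ?case by simp
next
  case (Suc N)
  show ?case
  proof (cases "n = 0")
    case True then show ?thesis by simp
  next
    case False
    have "n div q < q ^ N" using Suc.prems
      by (simp add: div_less_iff_less_mult mult.commute)
    then show ?thesis using Suc digits_pos[of q n] False by simp
  qed
qed

lemma digits_spec: "2 \<le> q \<Longrightarrow> digits q ((q - 1) * q ^ j) = replicate j 0 @ [q - 1]"
proof (induction j)
  case 0
  then show ?case using digits_pos[of q "q - 1"] by simp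
next
  case (Suc j)
  have pos: "0 < (q - 1) * q ^ Suc j" using Suc.prems by simp
  have "(q - 1) * q ^ Suc j mod q = 0" by simp
  moreover have "(q - 1) * q ^ Suc j div q = (q - 1) * q ^ j" using Suc.prems by simp
  ultimately show ?case using digits_pos[OF Suc.prems pos] Suc by simp
qed

lemma uniq:
  fixes c d :: "nat \<Rightarrow> int" and P :: int
  assumes "2 \<le> P" "\<forall>i<N. -1 \<le> c i \<and> c i \<le> P - 2" "\<forall>i<N. -1 \<le> d i \<and> d i \<le> P - 2"
    "(\<Sum>i<N. c i * P ^ i) = (\<Sum>i<N. d i * P ^ i)"
  shows "\<forall>i<N. c i = d i"
  using assms(2-)
proof (induction N arbitrary: c d)
  case 0 then show ?case by simp
next
  case (Suc N)
  have e: "c 0 + P * (\<Sum>i<N. c (Suc i) * P ^ i) = d 0 + P * (\<Sum>i<N. d (Suc i) * P ^ i)"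
    using Suc.prems(3) unfolding sum.lessThan_Suc_shift by (simp add: sum_distrib_left mult.assoc mult.left_commute)
  then have "c 0 - d 0 = P * ((\<Sum>i<N. d (Suc i) * P ^ i) - (\<Sum>i<N. c (Suc i) * P ^ i))"
    by (simp add: right_diff_distrib)
  then have "P dvd (c 0 - d 0)" by (metis dvd_triv_left)
  moreover have "\<bar>c 0 - d 0\<bar> < P" using Suc.prems(1,2) by fastforce
  ultimately have c0: "c 0 = d 0" using dvd_imp_le_int[of "c 0 - d 0" P] assms(1) by force
  then have "(\<Sum>i<N. c (Suc i) * P ^ i) = (\<Sum>i<N. d (Suc i) * P ^ i)" using e assms(1) by simp
  moreover have "\<forall>i<N. -1 \<le> c (Suc i) \<and> c (Suc i) \<le> P - 2" using Suc.prems(1) by simp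
  moreover have "\<forall>i<N. -1 \<le> d (Suc i) \<and> d (Suc i) \<le> P - 2" using Suc.prems(2) by simp
  ultimately have h: "\<forall>i<N. c (Suc i) = d (Suc i)" using Suc.IH[of "\<lambda>i. c (Suc i)" "\<lambda>i. d (Suc i)"] by blast
  show ?case
  proof (intro allI impI)
    fix i assume "i < Suc N"
    then show "c i = d i" using h c0 by (cases i) auto
  qed
qed

lemma bound:
  fixes c :: "nat \<Rightarrow> int" and P :: int
  assumes "1 \<le> P" "\<forall>i<N. \<bar>c i\<bar> \<le> P - 1"
  shows "\<bar>\<Sum>i<N. c i * P ^ i\<bar> \<le> P ^ N - 1"
  using assms(2)
proof (induction N)
  case 0 then show ?case by simp
next
  case (Suc N)
  have "\<bar>c N * P ^ N\<bar> \<le> (P - 1) * P ^ N"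
    using Suc.prems assms(1) by (simp add: abs_mult mult_right_mono)
  moreover have "\<bar>\<Sum>i<N. c i * P ^ i\<bar> \<le> P ^ N - 1" using Suc by simp
  ultimately have "\<bar>(\<Sum>i<N. c i * P ^ i) + c N * P ^ N\<bar> \<le> (P ^ N - 1) + (P - 1) * P ^ N"
    using abs_triangle_ineq[of "\<Sum>i<N. c i * P ^ i" "c N * P ^ N"] by linarith
  also have "\<dots> = P ^ Suc N - 1" by (simp add: algebra_simps)
  finally show ?case by simp
qed

definition hA :: "nat \<Rightarrow> nat set \<Rightarrow> nat \<Rightarrow> nat \<Rightarrow> int" where
  "hA q A i d = (if d = q - 1 \<and> i \<in> A then -1 else int d)"

definition tauA :: "nat \<Rightarrow> nat set \<Rightarrow> nat list \<Rightarrow> int" where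
  "tauA q A L = (if L = [] then 0 else hA q A (length L - 1) (last L))"

definition cf :: "nat \<Rightarrow> nat set \<Rightarrow> nat list \<Rightarrow> nat \<Rightarrow> int" where
  "cf q A L i = (if i < length L then hA q A i (L ! i) else 0)"

definition V :: "nat \<Rightarrow> nat \<Rightarrow> nat set \<Rightarrow> nat list \<Rightarrow> int" where
  "V p q A L = (\<Sum>i<length L. cf q A L i * int p ^ i)"

lemma hA_0: "2 \<le> q \<Longrightarrow> hA q A i 0 = 0"
  by (simp add: hA_def)

lemma hA_range: "2 \<le> q \<Longrightarrow> q < p \<Longrightarrow> d < q \<Longrightarrow> -1 \<le> hA q A i d \<and> hA q A i d \<le> int p - 2"
  by (auto simp add: hA_def)

lemma hA_zero_iff: "2 \<le> q \<Longrightarrow> hA q A i d = 0 \<longleftrightarrow> d = 0"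
  by (auto simp add: hA_def)

lemma hA_inj: "2 \<le> q \<Longrightarrow> hA q A i a = hA q A i b \<Longrightarrow> a = b"
  by (auto simp add: hA_def split: if_splits)

lemma cf_range: "2 \<le> q \<Longrightarrow> q < p \<Longrightarrow> \<forall>d\<in>set L. d < q \<Longrightarrow> -1 \<le> cf q A L i \<and> cf q A L i \<le> int p - 2"
  using hA_range[of q p] by (auto simp add: cf_def)

lemma V_ext: "length L \<le> M \<Longrightarrow> (\<Sum>i<M. cf q A L i * int p ^ i) = V p q A L"
  unfolding V_def
  by (rule sum.mono_neutral_right) (auto simp: cf_def)

lemma lam_eq:
  assumes "2 \<le> q"
  shows "lam p q (tauA q A) n = real_of_int (V p q A (digits q n))"
proof (cases "n = 0")
  case True then show ?thesis by (simp add: lam_def V_def)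
next
  case False
  let ?I = "digits q n"
  have t0: "tauA q A (?I @ 0 # replicate k 0) = 0" for k
    using assms by (simp add: tauA_def hA_def)
  have t1: "tauA q A (take (Suc j) ?I) = cf q A ?I j" if "j < length ?I" for j
    using that by (simp add: tauA_def cf_def take_Suc_conv_app_nth)
  have "lam p q (tauA q A) n = (\<Sum>j<length ?I. real_of_int (tauA q A (take (Suc j) ?I)) * real p ^ j)"
    using False by (simp add: lam_def Let_def t0)
  also have "\<dots> = (\<Sum>j<length ?I. real_of_int (cf q A ?I j) * real p ^ j)"
    by (rule sum.cong) (simp_all add: t1)
  also have "\<dots> = real_of_int (V p q A ?I)"
    by (simp add: V_def)
  finally show ?thesis .
qed

lemma regular_tauA:
  assumes "2 \<le> q" "q < p"
  shows "regular_spectrum_map p q (tauA q A)"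
proof -
  have r1: "\<forall>I\<in>words q. tauA q A I \<in> {-1 .. int p - 2}"
  proof
    fix I assume "I \<in> words q"
    then have "last I < q" by (simp add: words_def)
    then show "tauA q A I \<in> {-1 .. int p - 2}" using assms by (auto simp: tauA_def hA_def)
  qed
  have r2: "\<forall>n\<ge>1. tauA q A (replicate n 0) = 0"
    using assms by (auto simp: tauA_def hA_def)
  have r3: "\<forall>I\<in>words q. tauA q A I mod int q = int (last I) mod int q"
  proof
    fix I assume "I \<in> words q"
    then have "I \<noteq> []" by (simp add: words_def)
    moreover have "(-1::int) mod int q = int (q - 1) mod int q"
      using assms by (simp add: zmod_minus1 of_nat_diff)
    ultimately show "tauA q A I mod int q = int (last I) mod int q"
      by (auto simp: tauA_def hA_def)
  qed
  have r4: "\<forall>I\<in>words q. \<exists>L. \<forall>l\<ge>L. tauA q A (I @ replicate l 0) = 0"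
  proof
    fix I assume "I \<in> words q"
    show "\<exists>L. \<forall>l\<ge>L. tauA q A (I @ replicate l 0) = 0"
      using assms by (intro exI[of _ 1]) (auto simp: tauA_def hA_def)
  qed
  have "ell q (tauA q A) n \<le> 0" for n
  proof -
    have "{k::nat. k \<ge> 1 \<and> tauA q A (digits q n @ replicate k 0) \<noteq> 0} = {}"
      using assms by (auto simp: tauA_def hA_def)
    then show ?thesis unfolding ell_def by (metis card.empty order_refl)
  qed
  then show ?thesis using r1 r2 r3 r4 by (auto simp: regular_spectrum_map_def regular_mapping_def)
qed

lemma V_eq_imp:
  assumes q: "2 \<le> q" "q < p"
    and L1: "\<forall>d\<in>set L1. d < q" "L1 \<noteq> [] \<Longrightarrow> last L1 \<noteq> 0"
    and L2: "\<forall>d\<in>set L2. d < q" "L2 \<noteq> [] \<Longrightarrow> last L2 \<noteq> 0"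
    and len: "length L1 \<le> length L2"
    and eq: "V p q A L1 = V p q A L2"
  shows "L1 = L2"
proof -
  define M where "M = length L2"
  have "(\<Sum>i<M. cf q A L1 i * int p ^ i) = (\<Sum>i<M. cf q A L2 i * int p ^ i)"
    using V_ext[of L1 M q A p] len eq by (simp add: M_def V_def)
  moreover have "\<forall>i<M. -1 \<le> cf q A L1 i \<and> cf q A L1 i \<le> int p - 2"
    using cf_range[OF q L1(1)] by blast
  moreover have "\<forall>i<M. -1 \<le> cf q A L2 i \<and> cf q A L2 i \<le> int p - 2"
    using cf_range[OF q L2(1)] by blast
  moreover have "(2::int) \<le> int p" using q by simp
  ultimately have ceq: "\<forall>i<M. cf q A L1 i = cf q A L2 i"
    using uniq[of "int p" M "cf q A L1" "cf q A L2"] by blast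
  have lenEq: "length L1 = M"
  proof (rule ccontr)
    assume "length L1 \<noteq> M"
    then have lt: "length L1 < M" using len M_def by simp
    then have ne: "L2 \<noteq> []" using M_def by auto
    have "cf q A L1 (M - 1) = 0" using lt by (simp add: cf_def)
    moreover have "cf q A L2 (M - 1) = hA q A (M - 1) (last L2)"
      using ne by (simp add: cf_def M_def last_conv_nth)
    moreover have "hA q A (M - 1) (last L2) \<noteq> 0" using hA_zero_iff[OF q(1)] L2(2) ne by simp
    moreover have "M - 1 < M" using lt by simp
    ultimately show False using ceq by metis
  qed
  show ?thesis
  proof (rule nth_equalityI)
    show "length L1 = length L2" using lenEq M_def by simp
    fix i assume "i < length L1"
    then have "hA q A i (L1 ! i) = hA q A i (L2 ! i)"
      using ceq lenEq M_def by (auto simp: cf_def)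
    then show "L1 ! i = L2 ! i" using hA_inj[OF q(1)] by blast
  qed
qed

lemma lam_inj:
  assumes q: "2 \<le> q" "q < p" and e: "lam p q (tauA q A) n = lam p q (tauA q A) m"
  shows "n = m"
proof -
  have v: "V p q A (digits q n) = V p q A (digits q m)" using e lam_eq[OF q(1)] by simp
  have d1: "\<forall>d\<in>set (digits q n). d < q" "\<forall>d\<in>set (digits q m). d < q"
    using digits_lt[OF q(1)] by auto
  have d2: "digits q n \<noteq> [] \<Longrightarrow> last (digits q n) \<noteq> 0" "digits q m \<noteq> [] \<Longrightarrow> last (digits q m) \<noteq> 0"
    using digits_last[OF q(1)] by auto
  have "digits q n = digits q m"
  proof (cases "length (digits q n) \<le> length (digits q m)")
    case True then show ?thesis using V_eq_imp[OF q d1(1) d2(1) d1(2) d2(2) True v] by simp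
  next
    case False then show ?thesis using V_eq_imp[OF q d1(2) d2(2) d1(1) d2(1) _ v[symmetric]] by simp
  qed
  then show ?thesis using digits_inj[OF q(1)] by simp
qed

lemma sum_delta_pow: "j < M \<Longrightarrow> (\<Sum>i<M. (if i = j then -1 else 0) * (P::int) ^ i) = - (P ^ j)"
proof -
  assume "j < M"
  have "(\<Sum>i<M. (if i = j then -1 else 0) * P ^ i) = (\<Sum>i<M. if i = j then - (P ^ i) else 0)"
    by (rule sum.cong) auto
  also have "\<dots> = - (P ^ j)" using \<open>j < M\<close> by (subst sum.delta) auto
  finally show ?thesis .
qed

lemma in_Lambda:
  assumes q: "2 \<le> q" and j: "j \<in> A"
  shows "lam p q (tauA q A) ((q - 1) * q ^ j) = - (real p ^ j)"
proof -
  let ?L = "replicate j 0 @ [q - 1]"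
  have "\<And>i. i < Suc j \<Longrightarrow> cf q A ?L i = (if i = j then -1 else 0)"
    using q j by (auto simp: cf_def hA_def nth_append)
  then have "V p q A ?L = (\<Sum>i<Suc j. (if i = j then -1 else 0) * int p ^ i)"
    unfolding V_def by (intro sum.cong) auto
  also have "\<dots> = - (int p ^ j)" by (rule sum_delta_pow) simp
  finally show ?thesis using lam_eq[OF q] digits_spec[OF q] by simp
qed

lemma notin_Lambda:
  assumes q: "2 \<le> q" "q < p" and j: "j \<notin> B"
  shows "- (real p ^ j) \<notin> Lambda p q (tauA q B)"
proof
  assume "- (real p ^ j) \<in> Lambda p q (tauA q B)"
  then obtain n where "lam p q (tauA q B) n = - (real p ^ j)" by (auto simp: Lambda_def)
  then have "real_of_int (V p q B (digits q n)) = real_of_int (- (int p ^ j))"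
    using lam_eq[OF q(1)] by simp
  then have v: "V p q B (digits q n) = - (int p ^ j)" by (simp only: of_int_eq_iff)
  define L where "L = digits q n"
  define M where "M = max (length L) (Suc j)"
  have "(\<Sum>i<M. cf q B L i * int p ^ i) = (\<Sum>i<M. (if i = j then -1 else 0) * int p ^ i)"
    using V_ext[of L M q B p] v sum_delta_pow[of j M "int p"] by (simp add: M_def L_def)
  moreover have "\<forall>i<M. -1 \<le> cf q B L i \<and> cf q B L i \<le> int p - 2"
    using cf_range[OF q, of L] digits_lt[OF q(1)] L_def by blast
  moreover have "\<forall>i<M. -1 \<le> (if i = j then -1 else (0::int)) \<and> (if i = j then -1 else (0::int)) \<le> int p - 2"
    using q by auto
  moreover have "(2::int) \<le> int p" using q by simp
  ultimately have "\<forall>i<M. cf q B L i = (if i = j then -1 else 0)"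
    using uniq[of "int p" M "cf q B L" "\<lambda>i. if i = j then -1 else 0"] by blast
  then have "cf q B L j = -1" by (simp add: M_def)
  then show False using j by (auto simp: cf_def hA_def split: if_splits)
qed

lemma Lambda_inj:
  assumes q: "2 \<le> q" "q < p"
  shows "inj (\<lambda>A. Lambda p q (tauA q A))"
proof
  fix A B assume e: "Lambda p q (tauA q A) = Lambda p q (tauA q B)"
  show "A = B"
  proof (rule ccontr)
    assume "A \<noteq> B"
    then obtain j where "(j \<in> A \<and> j \<notin> B) \<or> (j \<in> B \<and> j \<notin> A)" by blast
    then show False
    proof
      assume "j \<in> A \<and> j \<notin> B"
      then show False using in_Lambda[OF q(1), of j A p] notin_Lambda[OF q, of j B] e
        by (metis Lambda_def rangeI)
    next
      assume "j \<in> B \<and> j \<notin> A"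
      then show False using in_Lambda[OF q(1), of j B p] notin_Lambda[OF q, of j A] e
        by (metis Lambda_def rangeI)
    qed
  qed
qed

lemma lam_bound:
  assumes q: "2 \<le> q" "q < p" and n: "n < q ^ N"
  shows "\<bar>lam p q (tauA q A) n\<bar> < real p ^ N"
proof -
  let ?L = "digits q n"
  have len: "length ?L \<le> N" using digits_len[OF q(1) n] .
  have rg: "-1 \<le> cf q A ?L i \<and> cf q A ?L i \<le> int p - 2" for i
    using cf_range[OF q, of ?L A] digits_lt[OF q(1), of _ n] by blast
  have "\<forall>i<N. \<bar>cf q A ?L i\<bar> \<le> int p - 1"
  proof (intro allI impI)
    fix i assume "i < N"
    show "\<bar>cf q A ?L i\<bar> \<le> int p - 1" using rg[of i] q by (auto simp: abs_if)
  qed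
  then have "\<bar>\<Sum>i<N. cf q A ?L i * int p ^ i\<bar> \<le> int p ^ N - 1"
    using bound[of "int p" N] q by simp
  then have "\<bar>V p q A ?L\<bar> \<le> int p ^ N - 1" using V_ext[OF len] by simp
  then have "\<bar>real_of_int (V p q A ?L)\<bar> \<le> real p ^ N - 1"
    by (metis (mono_tags, lifting) of_int_1 of_int_abs of_int_diff of_int_le_iff of_int_of_nat_eq of_int_power)
  then show ?thesis using lam_eq[OF q(1)] by simp
qed

lemma finite_Lambda_ball:
  assumes q: "2 \<le> q"
  shows "finite (Lambda p q (tauA q A) \<inter> ball x r)"
proof -
  have "Lambda p q (tauA q A) \<inter> ball x r \<subseteq> real_of_int ` {\<lfloor>x - r\<rfloor> .. \<lceil>x + r\<rceil>}"
  proof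
    fix y assume y: "y \<in> Lambda p q (tauA q A) \<inter> ball x r"
    then obtain n where "y = lam p q (tauA q A) n" by (auto simp: Lambda_def)
    then obtain k where k: "y = real_of_int k" using lam_eq[OF q] by blast
    have "x - r < y" "y < x + r" using y by (auto simp: dist_real_def abs_less_iff)
    then have "\<lfloor>x - r\<rfloor> \<le> k" "k \<le> \<lceil>x + r\<rceil>" using k by linarith+
    then show "y \<in> real_of_int ` {\<lfloor>x - r\<rfloor> .. \<lceil>x + r\<rceil>}" using k by auto
  qed
  then show ?thesis by (rule finite_subset) simp
qed

lemma count_ball:
  assumes q: "2 \<le> q" "q < p"
  shows "q ^ N \<le> card (Lambda p q (tauA q A) \<inter> ball 0 (real p ^ N))"
proof -
  have sub: "lam p q (tauA q A) ` {..<q ^ N} \<subseteq> Lambda p q (tauA q A) \<inter> ball 0 (real p ^ N)"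
    using lam_bound[OF q] by (auto simp: Lambda_def)
  have "inj_on (lam p q (tauA q A)) {..<q ^ N}"
    using lam_inj[OF q] by (auto simp: inj_on_def)
  then have "card (lam p q (tauA q A) ` {..<q ^ N}) = q ^ N" by (simp add: card_image)
  then show ?thesis using card_mono[OF finite_Lambda_ball[OF q(1)] sub] by simp
qed

lemma pow_powr_s:
  assumes q: "2 \<le> q" "q < p"
  shows "(real p ^ M) powr (ln (real q) / ln (real p)) = real q ^ M"
proof -
  have p1: "1 < real p" using q by simp
  have "real p powr (ln (real q) / ln (real p)) = real q"
    using p1 q by (simp add: powr_def)
  then have "(real p powr (ln (real q) / ln (real p))) powr real M = real q ^ M"
    using q by (simp add: powr_realpow)
  moreover have "(real p ^ M) powr (ln (real q) / ln (real p)) = (real p powr real M) powr (ln (real q) / ln (real p))"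
    using p1 by (simp add: powr_realpow)
  ultimately show ?thesis by (simp add: powr_powr mult.commute)
qed

lemma exists_N:
  assumes p: "2 \<le> p" and h: "1 \<le> (h::real)"
  shows "\<exists>N. real p ^ N \<le> h \<and> h < real p ^ Suc N"
proof -
  have ex: "\<exists>M. h < real p ^ M" using p by (intro real_arch_pow) simp
  define M where "M = (LEAST M. h < real p ^ M)"
  have hM: "h < real p ^ M" unfolding M_def by (rule LeastI_ex[OF ex])
  have "M \<noteq> 0"
  proof
    assume "M = 0" then show False using hM h by simp
  qed
  then obtain N where MN: "M = Suc N" by (cases M) auto
  have "\<not> h < real p ^ N" using not_less_Least[of N "\<lambda>M. h < real p ^ M"] MN M_def by simp
  then have "real p ^ N \<le> h" by simp
  moreover have "h < real p ^ Suc N" using hM MN by simp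
  ultimately show ?thesis by blast
qed

lemma density_pos:
  assumes q: "2 \<le> q" "q < p"
  shows "upper_beurling_density (ln (real q) / ln (real p)) (Lambda p q (tauA q A)) > 0"
proof -
  define s where "s = ln (real q) / ln (real p)"
  define f where "f = (\<lambda>h::real. SUP x::real. ereal (real (card (Lambda p q (tauA q A) \<inter> ball x h)) / h powr s))"
  have ev: "eventually (\<lambda>h. ereal (1 / real q) \<le> f h) at_top"
  proof (rule eventually_at_top_linorder[THEN iffD2], intro exI allI impI)
    fix h :: real assume h: "1 \<le> h"
    obtain N where N: "real p ^ N \<le> h" "h < real p ^ Suc N" using exists_N[of p h] h q by auto
    have "q ^ N \<le> card (Lambda p q (tauA q A) \<inter> ball 0 (real p ^ N))" by (rule count_ball[OF q])
    also have "\<dots> \<le> card (Lambda p q (tauA q A) \<inter> ball 0 h)"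
      using N(1) by (intro card_mono finite_Lambda_ball[OF q(1)]) auto
    finally have c: "real q ^ N \<le> real (card (Lambda p q (tauA q A) \<inter> ball 0 h))"
      by (metis of_nat_le_iff of_nat_power)
    have hs: "h powr s \<le> real q ^ Suc N"
      using powr_mono2[of s h "real p ^ Suc N"] N(2) h pow_powr_s[OF q, of "Suc N"] q
      by (simp add: s_def)
    have hs0: "0 < h powr s" using h by simp
    have "1 / real q = real q ^ N / real q ^ Suc N" using q by simp
    also have "\<dots> \<le> real q ^ N / h powr s"
      using hs hs0 q by (intro divide_left_mono) (auto intro!: mult_pos_pos)
    also have "\<dots> \<le> real (card (Lambda p q (tauA q A) \<inter> ball 0 h)) / h powr s"
      using c hs0 by (intro divide_right_mono) auto
    finally have "ereal (1 / real q) \<le> ereal (real (card (Lambda p q (tauA q A) \<inter> ball 0 h)) / h powr s)"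
      by simp
    also have "\<dots> \<le> f h" unfolding f_def by (rule SUP_upper) simp
    finally show "ereal (1 / real q) \<le> f h" .
  qed
  have "ereal (1 / real q) \<le> Liminf at_top f" by (rule Liminf_bounded[OF ev])
  also have "\<dots> \<le> Limsup at_top f" by (rule Liminf_le_Limsup) simp
  finally have "ereal (1 / real q) \<le> upper_beurling_density s (Lambda p q (tauA q A))"
    by (simp add: upper_beurling_density_def f_def)
  moreover have "0 < ereal (1 / real q)" using q by simp
  ultimately show ?thesis unfolding s_def by order
qed

lemma uncountable_nat_sets: "uncountable (UNIV :: nat set set)"
  by (metis countable_eqpoll nat_sets_eqpoll_reals eqpoll_sym uncountable_UNIV_real)

theorem theorem1p6:
  fixes p q :: nat
  assumes "2 \<le> q" and "q < p" and "q dvd p"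
  defines "s \<equiv> ln (real q) / ln (real p)"
  shows "uncountable {Lambda p q \<tau> | \<tau>. regular_spectrum_map p q \<tau> \<and>
                        upper_beurling_density s (Lambda p q \<tau>) > 0}"
proof
  assume c: "countable {Lambda p q \<tau> | \<tau>. regular_spectrum_map p q \<tau> \<and>
                        upper_beurling_density s (Lambda p q \<tau>) > 0}"
  have "range (\<lambda>A. Lambda p q (tauA q A)) \<subseteq> {Lambda p q \<tau> | \<tau>. regular_spectrum_map p q \<tau> \<and>
                        upper_beurling_density s (Lambda p q \<tau>) > 0}"
    using regular_tauA[OF assms(1,2)] density_pos[OF assms(1,2)] unfolding s_def by blast
  then have "countable (range (\<lambda>A. Lambda p q (tauA q A)))" using c countable_subset by blast
  then have "countable (UNIV :: nat set set)"
    using countable_image_inj_on Lambda_inj[OF assms(1,2)] by blast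
  then show False using uncountable_nat_sets by simp
qed

end
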